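(* Let $J\subseteq[-\infty,+\infty]$ be a nonempty closed interval and let $f\colon J^n\to\mathbb{R}$ be a real-valued quasi-polynomial function on $J$. Then $f$ is comonotonically modular, and for every permutation $\sigma$ of $[n]$ there exist functions $f^\sigma_i\colon J\to\mathbb{R}$, $i\in[n]$, such that $$f(\mathbf{x})=\sum_{i=1}^n f^\sigma_i(x_{\sigma(i)})\qquad\text{for all }\mathbf{x}\in J^n\text{ with }x_{\sigma(1)}\leq\cdots\leq x_{\sigma(n)}.$$
   Context: $[n]=\{1,\ldots,n\}$. A lattice polynomial function on $\overline{\mathbb{R}}=[-\infty,+\infty]$ is a map $p\colon\overline{\mathbb{R}}^n\to\overline{\mathbb{R}}$ that can be expressed as a combination of the variables and constants of $\overline{\mathbb{R}}$ using the binary operations $\min$ and $\max$. A quasi-polynomial function on $J$ is a map $f\colon J^n\to\overline{\mathbb{R}}$ of the form $f(\mathbf{x})=p(\varphi(x_1),\ldots,\varphi(x_n))$, where $p$ is a lattice polynomial function on $\overline{\mathbb{R}}$ and $\varphi\colon J\to\overline{\mathbb{R}}$ is nondecreasing. Two tuples $\mathbf{x},\mathbf{x}'\in J^n$ are comonotonic if there is a permutation $\sigma$ of $[n]$ with $x_{\sigma(1)}\leq\cdots\leq x_{\sigma(n)}$ and $x'_{\sigma(1)}\leq\cdots\leq x'_{\sigma(n)}$. A real-valued $f\colon J^n\to\mathbb{R}$ is comonotonically modular if $f(\mathbf{x})+f(\mathbf{x}')=f(\mathbf{x}\wedge\mathbf{x}')+f(\mathbf{x}\vee\mathbf{x}')$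 for all comonotonic $\mathbf{x},\mathbf{x}'\in J^n$, where $\wedge,\vee$ are componentwise min and max. *)

theory Defs
  imports "HOL-Library.Extended_Real" "HOL-Combinatorics.Permutations"
begin

datatype lpoly = Var nat | Const ereal | Min lpoly lpoly | Max lpoly lpoly

fun lp_eval :: "lpoly \<Rightarrow> (nat \<Rightarrow> ereal) \<Rightarrow> ereal" where
  "lp_eval (Var i) x = x i"
| "lp_eval (Const c) x = c"
| "lp_eval (Min p q) x = min (lp_eval p x) (lp_eval q x)"
| "lp_eval (Max p q) x = max (lp_eval p x) (lp_eval q x)"

fun lp_vars :: "lpoly \<Rightarrow> nat set" where
  "lp_vars (Var i) = {i}"
| "lp_vars (Const c) = {}"
| "lp_vars (Min p q) = lp_vars p \<union> lp_vars q"
| "lp_vars (Max p q) = lp_vars p \<union> lp_vars q"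

definition tuples :: "nat \<Rightarrow> ereal set \<Rightarrow> (nat \<Rightarrow> ereal) set" where
  "tuples n J = PiE {1..n} (\<lambda>_. J)"

definition quasi_polynomial :: "nat \<Rightarrow> ereal set \<Rightarrow> ((nat \<Rightarrow> ereal) \<Rightarrow> real) \<Rightarrow> bool" where
  "quasi_polynomial n J f \<longleftrightarrow>
     (\<exists>p \<phi>. lp_vars p \<subseteq> {1..n} \<and> mono_on J \<phi> \<and>
        (\<forall>x \<in> tuples n J. ereal (f x) = lp_eval p (\<lambda>i. \<phi> (x i))))"

definition comonotonic :: "nat \<Rightarrow> (nat \<Rightarrow> ereal) \<Rightarrow> (nat \<Rightarrow> ereal) \<Rightarrow> bool" where
  "comonotonic n x x' \<longleftrightarrow>
     (\<exists>\<sigma>. \<sigma> permutes {1..n} \<and>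
        (\<forall>i j. 1 \<le> i \<and> i \<le> j \<and> j \<le> n \<longrightarrow> x (\<sigma> i) \<le> x (\<sigma> j) \<and> x' (\<sigma> i) \<le> x' (\<sigma> j)))"

definition tmin :: "nat \<Rightarrow> (nat \<Rightarrow> ereal) \<Rightarrow> (nat \<Rightarrow> ereal) \<Rightarrow> (nat \<Rightarrow> ereal)" where
  "tmin n x x' = (\<lambda>i\<in>{1..n}. min (x i) (x' i))"

definition tmax :: "nat \<Rightarrow> (nat \<Rightarrow> ereal) \<Rightarrow> (nat \<Rightarrow> ereal) \<Rightarrow> (nat \<Rightarrow> ereal)" where
  "tmax n x x' = (\<lambda>i\<in>{1..n}. max (x i) (x' i))"

definition comonotonically_modular :: "nat \<Rightarrow> ereal set \<Rightarrow> ((nat \<Rightarrow> ereal) \<Rightarrow> real) \<Rightarrow> bool" where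
  "comonotonically_modular n J f \<longleftrightarrow>
     (\<forall>x \<in> tuples n J. \<forall>x' \<in> tuples n J. comonotonic n x x' \<longrightarrow>
        f x + f x' = f (tmin n x x') + f (tmax n x x'))"

end

theory Submission
  imports Defs
begin

lemma lp_eval_cong: "lp_vars p \<subseteq> V \<Longrightarrow> (\<forall>i\<in>V. y i = z i) \<Longrightarrow> lp_eval p y = lp_eval p z"
  by (induction p) auto

lemma lp_thr: "lp_vars p \<subseteq> V \<Longrightarrow> (\<forall>i\<in>V. t \<le> y i \<longrightarrow> t \<le> y' i) \<Longrightarrow> t \<le> lp_eval p y \<Longrightarrow> t \<le> lp_eval p y'"
  by (induction p) (auto simp: le_max_iff_disj)

lemma le_all_eq: fixes u v :: ereal assumes "\<And>t. t \<le> u \<longleftrightarrow> t \<le> v" shows "u = v"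
  using assms[of u] assms[of v] by (simp add: antisym)

lemma lp_minmax:
  assumes V: "lp_vars p \<subseteq> V"
    and nest: "\<forall>t. (\<forall>i\<in>V. t \<le> y i \<longrightarrow> t \<le> y' i) \<or> (\<forall>i\<in>V. t \<le> y' i \<longrightarrow> t \<le> y i)"
  shows "lp_eval p (\<lambda>i. min (y i) (y' i)) = min (lp_eval p y) (lp_eval p y')"
    and "lp_eval p (\<lambda>i. max (y i) (y' i)) = max (lp_eval p y) (lp_eval p y')"
proof -
  show "lp_eval p (\<lambda>i. min (y i) (y' i)) = min (lp_eval p y) (lp_eval p y')"
  proof (rule le_all_eq)
    fix t :: ereal
    show "t \<le> lp_eval p (\<lambda>i. min (y i) (y' i)) \<longleftrightarrow> t \<le> min (lp_eval p y) (lp_eval p y')"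
    proof (cases "\<forall>i\<in>V. t \<le> y i \<longrightarrow> t \<le> y' i")
      case True
      have a: "t \<le> lp_eval p (\<lambda>i. min (y i) (y' i)) \<longleftrightarrow> t \<le> lp_eval p y"
        using lp_thr[OF V, of t y "\<lambda>i. min (y i) (y' i)"] lp_thr[OF V, of t "\<lambda>i. min (y i) (y' i)" y] True
        by auto
      have b: "t \<le> lp_eval p y \<Longrightarrow> t \<le> lp_eval p y'" using lp_thr[OF V, of t y y'] True by auto
      show ?thesis using a b by auto
    next
      case False
      then have True': "\<forall>i\<in>V. t \<le> y' i \<longrightarrow> t \<le> y i" using nest by blast
      have a: "t \<le> lp_eval p (\<lambda>i. min (y i) (y' i)) \<longleftrightarrow> t \<le> lp_eval p y'"
        using lp_thr[OF V, of t y' "\<lambda>i. min (y i) (y' i)"] lp_thr[OF V, of t "\<lambda>i. min (y i) (y' i)" y'] True'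
        by auto
      have b: "t \<le> lp_eval p y' \<Longrightarrow> t \<le> lp_eval p y" using lp_thr[OF V, of t y' y] True' by auto
      show ?thesis using a b by auto
    qed
  qed
  show "lp_eval p (\<lambda>i. max (y i) (y' i)) = max (lp_eval p y) (lp_eval p y')"
  proof (rule le_all_eq)
    fix t :: ereal
    show "t \<le> lp_eval p (\<lambda>i. max (y i) (y' i)) \<longleftrightarrow> t \<le> max (lp_eval p y) (lp_eval p y')"
    proof (cases "\<forall>i\<in>V. t \<le> y i \<longrightarrow> t \<le> y' i")
      case True
      have a: "t \<le> lp_eval p (\<lambda>i. max (y i) (y' i)) \<longleftrightarrow> t \<le> lp_eval p y'"
        using lp_thr[OF V, of t y' "\<lambda>i. max (y i) (y' i)"] lp_thr[OF V, of t "\<lambda>i. max (y i) (y' i)" y'] True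
        by (auto simp: le_max_iff_disj)
      have b: "t \<le> lp_eval p y \<Longrightarrow> t \<le> lp_eval p y'" using lp_thr[OF V, of t y y'] True by auto
      show ?thesis using a b by (auto simp: le_max_iff_disj)
    next
      case False
      then have True': "\<forall>i\<in>V. t \<le> y' i \<longrightarrow> t \<le> y i" using nest by blast
      have a: "t \<le> lp_eval p (\<lambda>i. max (y i) (y' i)) \<longleftrightarrow> t \<le> lp_eval p y"
        using lp_thr[OF V, of t y "\<lambda>i. max (y i) (y' i)"] lp_thr[OF V, of t "\<lambda>i. max (y i) (y' i)" y] True'
        by (auto simp: le_max_iff_disj)
      have b: "t \<le> lp_eval p y' \<Longrightarrow> t \<le> lp_eval p y" using lp_thr[OF V, of t y' y] True' by auto
      show ?thesis using a b by (auto simp: le_max_iff_disj)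
    qed
  qed
qed

lemma modular:
  assumes "quasi_polynomial n J f"
  shows "comonotonically_modular n J f"
  unfolding comonotonically_modular_def
proof (intro ballI impI)
  obtain p \<phi> where pV: "lp_vars p \<subseteq> {1..n}" and mono: "mono_on J \<phi>"
    and fx: "\<forall>x \<in> tuples n J. ereal (f x) = lp_eval p (\<lambda>i. \<phi> (x i))"
    using assms unfolding quasi_polynomial_def by blast
  fix x x' assume x: "x \<in> tuples n J" and x': "x' \<in> tuples n J" and cm: "comonotonic n x x'"
  obtain \<sigma> where sp: "\<sigma> permutes {1..n}" and srt:
    "\<forall>i j. 1 \<le> i \<and> i \<le> j \<and> j \<le> n \<longrightarrow> x (\<sigma> i) \<le> x (\<sigma> j) \<and> x' (\<sigma> i) \<le> x' (\<sigma> j)"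
    using cm unfolding comonotonic_def by blast
  have xJ: "i \<in> {1..n} \<Longrightarrow> x i \<in> J" for i using x unfolding tuples_def by auto
  have x'J: "i \<in> {1..n} \<Longrightarrow> x' i \<in> J" for i using x' unfolding tuples_def by auto
  define y where "y i = \<phi> (x i)" for i
  define y' where "y' i = \<phi> (x' i)" for i
  have pos: "i \<in> {1..n} \<Longrightarrow> inv \<sigma> i \<in> {1..n} \<and> \<sigma> (inv \<sigma> i) = i" for i
    using permutes_inv[OF sp] permutes_in_image permutes_inverses(1)[OF sp] by metis
  have nest: "\<forall>t. (\<forall>i\<in>{1..n}. t \<le> y i \<longrightarrow> t \<le> y' i) \<or> (\<forall>i\<in>{1..n}. t \<le> y' i \<longrightarrow> t \<le> y i)"
  proof (rule ccontr)
    assume "\<not> ?thesis"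
    then obtain t i j where i: "i \<in> {1..n}" "t \<le> y i" "\<not> t \<le> y' i"
      and j: "j \<in> {1..n}" "t \<le> y' j" "\<not> t \<le> y j" by blast
    define u where "u = inv \<sigma> i"
    define v where "v = inv \<sigma> j"
    have u: "u \<in> {1..n}" "\<sigma> u = i" using pos[OF i(1)] u_def by auto
    have v: "v \<in> {1..n}" "\<sigma> v = j" using pos[OF j(1)] v_def by auto
    show False
    proof (cases "u \<le> v")
      case True
      then have "x i \<le> x j" using srt u v by force
      then have "y i \<le> y j" unfolding y_def using mono_onD[OF mono] xJ i(1) j(1) by blast
      then show False using i j by auto
    next
      case False
      then have "x' j \<le> x' i" using srt u v by force
      then have "y' j \<le> y' i" unfolding y'_def using mono_onD[OF mono] x'J i(1) j(1) by blast
      then show False using i j by auto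
    qed
  qed
  have tminJ: "tmin n x x' \<in> tuples n J" unfolding tmin_def tuples_def
    using xJ x'J by (auto simp: min_def)
  have tmaxJ: "tmax n x x' \<in> tuples n J" unfolding tmax_def tuples_def
    using xJ x'J by (auto simp: max_def)
  have phimin: "i \<in> {1..n} \<Longrightarrow> \<phi> (tmin n x x' i) = min (y i) (y' i)" for i
    unfolding tmin_def y_def y'_def using mono_onD[OF mono] xJ x'J
    apply (cases "x i \<le> x' i")
     apply (auto simp: min_def)
    by (metis nle_le order_antisym)
  have phimax: "i \<in> {1..n} \<Longrightarrow> \<phi> (tmax n x x' i) = max (y i) (y' i)" for i
    unfolding tmax_def y_def y'_def using mono_onD[OF mono] xJ x'J
    apply (cases "x i \<le> x' i")
     apply (auto simp: max_def)
    by (metis nle_le order_antisym)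
  have e1: "ereal (f (tmin n x x')) = min (ereal (f x)) (ereal (f x'))"
  proof -
    have "ereal (f (tmin n x x')) = lp_eval p (\<lambda>i. \<phi> (tmin n x x' i))" using fx tminJ by blast
    also have "\<dots> = lp_eval p (\<lambda>i. min (y i) (y' i))"
      by (rule lp_eval_cong[OF pV]) (simp add: phimin)
    also have "\<dots> = min (lp_eval p y) (lp_eval p y')" by (rule lp_minmax(1)[OF pV nest])
    finally show ?thesis using fx x x' unfolding y_def y'_def by simp
  qed
  have e2: "ereal (f (tmax n x x')) = max (ereal (f x)) (ereal (f x'))"
  proof -
    have "ereal (f (tmax n x x')) = lp_eval p (\<lambda>i. \<phi> (tmax n x x' i))" using fx tmaxJ by blast
    also have "\<dots> = lp_eval p (\<lambda>i. max (y i) (y' i))"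
      by (rule lp_eval_cong[OF pV]) (simp add: phimax)
    also have "\<dots> = max (lp_eval p y) (lp_eval p y')" by (rule lp_minmax(2)[OF pV nest])
    finally show ?thesis using fx x x' unfolding y_def y'_def by simp
  qed
  have "f (tmin n x x') = min (f x) (f x')" using e1 by (simp add: min_def split: if_splits)
  moreover have "f (tmax n x x') = max (f x) (f x')" using e2 by (simp add: max_def split: if_splits)
  ultimately show "f x + f x' = f (tmin n x x') + f (tmax n x x')" by (simp add: min_def max_def)
qed

theorem corollary21:
  fixes n :: nat and a b :: ereal and f :: "(nat \<Rightarrow> ereal) \<Rightarrow> real"
  assumes "n \<ge> 1" and "a \<le> b"
    and "quasi_polynomial n {a..b} f"
  shows "comonotonically_modular n {a..b} f \<and>
    (\<forall>\<sigma>. \<sigma> permutes {1..n} \<longrightarrow>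
       (\<exists>F :: nat \<Rightarrow> ereal \<Rightarrow> real. \<forall>x \<in> tuples n {a..b}.
          (\<forall>i j. 1 \<le> i \<and> i \<le> j \<and> j \<le> n \<longrightarrow> x (\<sigma> i) \<le> x (\<sigma> j)) \<longrightarrow>
          f x = (\<Sum>i=1..n. F i (x (\<sigma> i)))))"
proof -
  have md: "comonotonically_modular n {a..b} f" using modular assms(3) .
  moreover have "\<forall>\<sigma>. \<sigma> permutes {1..n} \<longrightarrow>
       (\<exists>F :: nat \<Rightarrow> ereal \<Rightarrow> real. \<forall>x \<in> tuples n {a..b}.
          (\<forall>i j. 1 \<le> i \<and> i \<le> j \<and> j \<le> n \<longrightarrow> x (\<sigma> i) \<le> x (\<sigma> j)) \<longrightarrow>
          f x = (\<Sum>i=1..n. F i (x (\<sigma> i))))"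
  proof (intro allI impI)
    fix \<sigma> assume sp: "\<sigma> permutes {1..n}"
    have pos: "j \<in> {1..n} \<Longrightarrow> inv \<sigma> j \<in> {1..n} \<and> \<sigma> (inv \<sigma> j) = j" for j
      using permutes_inv[OF sp] permutes_in_image permutes_inverses(1)[OF sp] by metis
    have pos2: "m \<in> {1..n} \<Longrightarrow> \<sigma> m \<in> {1..n} \<and> inv \<sigma> (\<sigma> m) = m" for m
      using permutes_in_image[OF sp] permutes_inverses(2)[OF sp] by metis
    define T where "T i t = (\<lambda>j\<in>{1..n}. if inv \<sigma> j < i then a else t)" for i :: nat and t :: ereal
    define F where "F i t = f (T i t) - (if i < n then f (T (Suc i) t) else 0)" for i t
    have TJ: "t \<in> {a..b} \<Longrightarrow> T i t \<in> tuples n {a..b}" for i t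
      unfolding T_def tuples_def using assms(2) by auto
    show "\<exists>F :: nat \<Rightarrow> ereal \<Rightarrow> real. \<forall>x \<in> tuples n {a..b}.
          (\<forall>i j. 1 \<le> i \<and> i \<le> j \<and> j \<le> n \<longrightarrow> x (\<sigma> i) \<le> x (\<sigma> j)) \<longrightarrow>
          f x = (\<Sum>i=1..n. F i (x (\<sigma> i)))"
    proof (rule exI[of _ F], intro ballI impI)
      fix x assume x: "x \<in> tuples n {a..b}"
        and srt: "\<forall>i j. 1 \<le> i \<and> i \<le> j \<and> j \<le> n \<longrightarrow> x (\<sigma> i) \<le> x (\<sigma> j)"
      have xJ: "i \<in> {1..n} \<Longrightarrow> x i \<in> {a..b}" for i using x unfolding tuples_def by auto
      have xsJ: "m \<in> {1..n} \<Longrightarrow> x (\<sigma> m) \<in> {a..b}" for m using xJ pos2 by blast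
      define z where "z k = (\<lambda>j\<in>{1..n}. x (\<sigma> (min (inv \<sigma> j) k)))" for k
      have zJ: "1 \<le> k \<Longrightarrow> z k \<in> tuples n {a..b}" for k
      proof -
        assume k: "1 \<le> k"
        have "j \<in> {1..n} \<Longrightarrow> min (inv \<sigma> j) k \<in> {1..n}" for j using pos[of j] k by auto
        then show ?thesis unfolding z_def tuples_def using xsJ by auto
      qed
      have key: "k \<le> n \<Longrightarrow> 1 \<le> k \<Longrightarrow> f (z k) = (\<Sum>i=1..k. f (T i (x (\<sigma> i)))) - (\<Sum>i\<in>{1..<k}. f (T (Suc i) (x (\<sigma> i))))" for k
      proof (induction k)
        case 0 then show ?case by simp
      next
        case (Suc k)
        show ?case
        proof (cases "k = 0")
          case True
          have "z 1 = T 1 (x (\<sigma> 1))"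
          proof (rule ext)
            fix j show "z 1 j = T 1 (x (\<sigma> 1)) j"
            proof (cases "j \<in> {1..n}")
              case True
              then have "inv \<sigma> j \<ge> 1" using pos by auto
              then have "min (inv \<sigma> j) 1 = 1" "\<not> inv \<sigma> j < 1" by auto
              then show ?thesis unfolding z_def T_def using True by simp
            next
              case False
              then show ?thesis unfolding z_def T_def by auto
            qed
          qed
          then show ?thesis using True by simp
        next
          case False
          have k1: "1 \<le> k" "k < n" using False Suc.prems by auto
          have IH: "f (z k) = (\<Sum>i=1..k. f (T i (x (\<sigma> i)))) - (\<Sum>i\<in>{1..<k}. f (T (Suc i) (x (\<sigma> i))))"
            using Suc k1 by auto
          have sk: "x (\<sigma> k) \<le> x (\<sigma> (Suc k))" using srt k1 by auto
          have xk: "x (\<sigma> k) \<in> {a..b}" "x (\<sigma> (Suc k)) \<in> {a..b}" using xsJ k1 by auto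
          let ?X' = "T (Suc k) (x (\<sigma> (Suc k)))"
          have cm: "comonotonic n (z k) ?X'"
            unfolding comonotonic_def
          proof (rule exI[of _ \<sigma>], intro conjI sp allI impI)
            fix i j :: nat assume ij: "1 \<le> i \<and> i \<le> j \<and> j \<le> n"
            then have "i \<in> {1..n}" "j \<in> {1..n}" by auto
            note pi = pos2[OF this(1)] and pj = pos2[OF this(2)]
            show "z k (\<sigma> i) \<le> z k (\<sigma> j)"
              unfolding z_def using pi pj ij srt by (auto simp: min_def)
            show "?X' (\<sigma> i) \<le> ?X' (\<sigma> j)"
              unfolding T_def using pi pj ij xk by auto
          qed
          have tmn: "tmin n (z k) ?X' = T (Suc k) (x (\<sigma> k))"
          proof (rule ext)
            fix j show "tmin n (z k) ?X' j = T (Suc k) (x (\<sigma> k)) j"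
            proof (cases "j \<in> {1..n}")
              case True
              note pj = pos[OF True]
              show ?thesis
              proof (cases "inv \<sigma> j \<le> k")
                case True
                have "a \<le> x (\<sigma> (inv \<sigma> j))" using xsJ[of "inv \<sigma> j"] pj by simp
                then show ?thesis unfolding tmin_def z_def T_def using True pj
                  by (auto simp: min_def)
              next
                case False
                then show ?thesis unfolding tmin_def z_def T_def using pj sk \<open>j \<in> {1..n}\<close>
                  by (auto simp: min_def)
              qed
            qed (auto simp add: tmin_def T_def)
          qed
          have tmx: "tmax n (z k) ?X' = z (Suc k)"
          proof (rule ext)
            fix j show "tmax n (z k) ?X' j = z (Suc k) j"
            proof (cases "j \<in> {1..n}")
              case True
              note pj = pos[OF True]
              show ?thesis
              proof (cases "inv \<sigma> j \<le> k")
                case True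
                have "a \<le> x (\<sigma> (inv \<sigma> j))" using xsJ[of "inv \<sigma> j"] pj by simp
                then show ?thesis unfolding tmax_def z_def T_def using True pj
                  by (auto simp: max_def)
              next
                case False
                then have "min (inv \<sigma> j) (Suc k) = Suc k" by auto
                then show ?thesis unfolding tmax_def z_def T_def using pj sk \<open>j \<in> {1..n}\<close> False
                  by (auto simp: max_def)
              qed
            qed (auto simp add: tmax_def z_def)
          qed
          have "f (z k) + f ?X' = f (tmin n (z k) ?X') + f (tmax n (z k) ?X')"
            using md zJ[OF k1(1)] TJ[OF xk(2)] cm unfolding comonotonically_modular_def by blast
          then have "f (z (Suc k)) = f (z k) + f ?X' - f (T (Suc k) (x (\<sigma> k)))"
            using tmn tmx by simp
          then show ?thesis using IH k1 by simp
        qed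
      qed
      have zn: "z n = x"
      proof (rule ext)
        fix j show "z n j = x j"
          using pos[of j] PiE_arb[of x "{1..n}" "\<lambda>_. {a..b}" j] x
          unfolding z_def tuples_def by (auto simp: min_def)
      qed
      have "f x = (\<Sum>i=1..n. f (T i (x (\<sigma> i)))) - (\<Sum>i\<in>{1..<n}. f (T (Suc i) (x (\<sigma> i))))"
        using key[of n] assms(1) zn by simp
      also have "(\<Sum>i\<in>{1..<n}. f (T (Suc i) (x (\<sigma> i)))) = (\<Sum>i=1..n. (if i < n then f (T (Suc i) (x (\<sigma> i))) else 0))"
      proof -
        have "{1..n} = insert n {1..<n}" using assms(1) by auto
        then show ?thesis by simp
      qed
      finally show "f x = (\<Sum>i=1..n. F i (x (\<sigma> i)))"
        unfolding F_def by (simp add: sum_subtractf)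
    qed
  qed
  ultimately show ?thesis by blast
qed

end
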